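(* Let $j\ge2$ be an integer and $\lambda>0$. For every integer $n\ge\max\{\lceil\lambda^{-1}\rceil,\,j-2\}$ we have $$\lambda_{n,j}(\lambda)\ge\frac{\lambda}{(1+\lambda)^{j-1}}.$$ Moreover, $$\lim_{n\to\infty}\widehat\lambda_{n,j-1}(\lambda)=\lim_{n\to\infty}\lambda_{n,j}(\lambda)=\frac{\lambda}{(1+\lambda)^{j-1}}.$$
   Context: For an integer $n\ge1$ let $f_n(x)=(1+x)^{n+1}/x$ for $x>0$. The function $f_n$ is strictly decreasing on $(0,1/n]$ and strictly increasing on $[1/n,\infty)$. Regular graph exponents (Schmidt–Summerer), defined algebraically. For $\lambda\in[1/n,\infty)$ let $\mu\in(0,1/n]$ be the unique solution of $f_n(\mu)=f_n(\lambda)$, and set $$\lambda_{n,j}(\lambda)=\lambda^{1-\frac{j-1}{n+1}}\mu^{\frac{j-1}{n+1}},\qquad 1\le j\le n+2 .$$ Thus $\lambda_{n,1}=\lambda$, $\lambda_{n,n+2}=\mu$, and all ratios $\lambda_{n,j}/\lambda_{n,j+1}$ are equal. For $\lambda=\infty$ put $\lambda_{n,1}=\infty$, $\lambda_{n,2}=1$ and $\lambda_{n,j}=0$ for $j\ge3$. Put $\widehat\lambda_{n,j}(\lambda):=\lambda_{n,j+1}(\lambda)$ for $1\le j\le n+1$, and $\widehat\lambda_n(\lambda):=\lambda_{n,2}(\lambda)$. These are the exponents of the regular graph in dimension $n$ with parameter $\lambda_n=\lambda$. *)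

theory Defs
  imports "HOL-Analysis.Analysis"
begin

definition fn_SS :: "nat \<Rightarrow> real \<Rightarrow> real" where
  "fn_SS n x = (1 + x) ^ (n + 1) / x"

text \<open>For lambda in [1/n, infinity): the unique mu in (0, 1/n] with f_n(mu) = f_n(lambda).\<close>
definition mu_SS :: "nat \<Rightarrow> real \<Rightarrow> real" where
  "mu_SS n lam = (THE mu. 0 < mu \<and> mu \<le> 1 / real n \<and> fn_SS n mu = fn_SS n lam)"

text \<open>Regular graph exponents lambda_{n,j}(lambda), meaningful for 1 <= j <= n+2, lambda >= 1/n.\<close>
definition lambda_nj :: "nat \<Rightarrow> nat \<Rightarrow> real \<Rightarrow> real" where
  "lambda_nj n j lam =
     lam powr (1 - (real j - 1) / (real n + 1)) * (mu_SS n lam) powr ((real j - 1) / (real n + 1))"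

definition lambda_hat_nj :: "nat \<Rightarrow> nat \<Rightarrow> real \<Rightarrow> real" where
  "lambda_hat_nj n j lam = lambda_nj n (j + 1) lam"

end

theory Submission
  imports Defs
begin

lemma fn_deriv:
  assumes "x > 0"
  shows "DERIV (fn_SS n) x :> (1+x)^n * (real n * x - 1) / x^2"
proof -
  have "DERIV (\<lambda>x. (1 + x) ^ (n + 1) / x) x :>
     ((real (n+1) * (1+x)^n * 1) * x - (1+x)^(n+1) * 1) / (x * x)"
    by (rule derivative_eq_intros refl | use assms in auto)+
  moreover have "((real (n+1) * (1+x)^n * 1) * x - (1+x)^(n+1) * 1) / (x * x)
      = (1+x)^n * (real n * x - 1) / x^2"
    by (simp add: power2_eq_square algebra_simps)
  ultimately show ?thesis unfolding fn_SS_def[abs_def] by simp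
qed

lemma fn_cont: "0 < a \<Longrightarrow> continuous_on {a..b} (fn_SS n)"
  by (rule continuous_at_imp_continuous_on, auto intro!: DERIV_isCont fn_deriv)

lemma fn_dec:
  assumes "0 < a" "a < b" "b \<le> 1 / real n"
  shows "fn_SS n a > fn_SS n b"
proof (rule DERIV_neg_imp_decreasing_open[OF assms(2) _ fn_cont[OF assms(1)]])
  fix x assume x: "a < x" "x < b"
  have "real n * x < 1"
  proof (cases "n = 0")
    case False
    then have "x < 1 / real n" using x assms by auto
    then show ?thesis using False by (simp add: field_simps)
  qed auto
  moreover have "x > 0" using x assms by auto
  ultimately show "\<exists>y. DERIV (fn_SS n) x :> y \<and> y < 0"
    by (intro exI[of _ "(1+x)^n * (real n * x - 1) / x^2"])
       (auto intro!: fn_deriv divide_neg_pos mult_pos_neg)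
qed

lemma fn_inc:
  assumes "n \<ge> 1" "1 / real n \<le> a" "a \<le> b"
  shows "fn_SS n a \<le> fn_SS n b"
proof (rule DERIV_nonneg_imp_nondecreasing[OF assms(3)])
  fix x assume x: "a \<le> x" "x \<le> b"
  have "1 / real n > 0" using assms by simp
  then have xp: "x > 0" using x assms by linarith
  have "1 \<le> a * real n" using assms by (simp add: field_simps)
  also have "a * real n \<le> x * real n" by (rule mult_right_mono) (use x in auto)
  finally have "real n * x \<ge> 1" by (simp add: mult.commute)
  moreover note xp
  ultimately show "\<exists>y. DERIV (fn_SS n) x :> y \<and> y \<ge> 0"
    by (intro exI[of _ "(1+x)^n * (real n * x - 1) / x^2"]) (auto intro!: fn_deriv)
qed

lemma mu_props:
  assumes n: "n \<ge> 1" and lam: "1 / real n \<le> lam"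
  shows "0 < mu_SS n lam \<and> mu_SS n lam \<le> 1 / real n \<and> fn_SS n (mu_SS n lam) = fn_SS n lam"
proof -
  have "1 / real n > 0" using n by simp
  then have lampos: "lam > 0" using lam by linarith
  define y where "y = fn_SS n lam"
  have ypos: "y > 0" unfolding y_def fn_SS_def using lampos by simp
  define e where "e = min (1 / real n) (1 / y)"
  have epos: "e > 0" using n ypos unfolding e_def by simp
  have "(1 + e) ^ (n + 1) \<ge> 1" by (rule one_le_power) (use epos in simp)
  then have "fn_SS n e \<ge> 1 / e"
    unfolding fn_SS_def using epos by (simp add: divide_right_mono del: power_Suc)
  moreover have "1 / e \<ge> y" using ypos epos unfolding e_def
    by (smt (verit) divide_divide_eq_right divide_le_eq_1 min.cobounded2 mult_cancel_right1 nonzero_mult_div_cancel_left)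
  ultimately have ye: "y \<le> fn_SS n e" by simp
  have "fn_SS n (1 / real n) \<le> y" unfolding y_def using fn_inc[OF n _ lam] by simp
  moreover have "e \<le> 1 / real n" unfolding e_def by simp
  ultimately obtain x where x: "e \<le> x" "x \<le> 1 / real n" "fn_SS n x = y"
    using IVT2'[of "fn_SS n" "1 / real n" y e, OF _ ye _ fn_cont[OF epos]] by auto
  have ex: "0 < x \<and> x \<le> 1 / real n \<and> fn_SS n x = fn_SS n lam" using x epos y_def by auto
  have uniq: "z = x" if "0 < z \<and> z \<le> 1 / real n \<and> fn_SS n z = fn_SS n lam" for z
  proof (rule ccontr)
    assume "z \<noteq> x"
    then consider "z < x" | "x < z" by linarith
    then show False
      using fn_dec[of z x n] fn_dec[of x z n] that ex by (cases; auto)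
  qed
  have "\<exists>!z. 0 < z \<and> z \<le> 1 / real n \<and> fn_SS n z = fn_SS n lam"
    using ex uniq by blast
  from theI'[OF this] show ?thesis unfolding mu_SS_def .
qed

lemma lambda_formula:
  assumes n: "n \<ge> 1" and lam: "1 / real n \<le> lam" and j: "j \<ge> 1"
  shows "lambda_nj n j lam = lam * ((1 + mu_SS n lam) / (1 + lam)) ^ (j - 1)
     \<and> 0 < mu_SS n lam \<and> mu_SS n lam \<le> 1 / real n"
proof -
  define mu where "mu = mu_SS n lam"
  have mp: "0 < mu" "mu \<le> 1 / real n" "fn_SS n mu = fn_SS n lam"
    using mu_props[OF n lam] unfolding mu_def by auto
  have "1 / real n > 0" using n by simp
  then have lampos: "lam > 0" using lam by linarith
  define r where "r = (1 + mu) / (1 + lam)"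
  have rpos: "r > 0" unfolding r_def using mp lampos by simp
  have eq: "(1+mu)^(n+1) * lam = (1+lam)^(n+1) * mu"
    using mp(3) mp(1) lampos unfolding fn_SS_def by (simp add: field_simps del: power_Suc)
  have mu_eq: "mu = lam * r ^ (n+1)"
    unfolding r_def power_divide using eq lampos by (simp add: field_simps del: power_Suc)
  define t where "t = (real j - 1) / (real n + 1)"
  have t: "real (n+1) * t = real (j - 1)" unfolding t_def using j
    by (simp add: of_nat_diff divide_simps)
  have "lambda_nj n j lam = lam powr (1 - t) * mu powr t"
    unfolding lambda_nj_def t_def mu_def by simp
  also have "mu powr t = lam powr t * (r ^ (n+1)) powr t"
    unfolding mu_eq using lampos rpos by (simp add: powr_mult)
  also have "(r ^ (n+1)) powr t = r powr real (j - 1)"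
    using rpos t by (simp add: powr_realpow[symmetric] powr_powr del: power_Suc of_nat_Suc)
  also have "\<dots> = r ^ (j - 1)" using rpos by (simp add: powr_realpow)
  also have "lam powr (1 - t) * (lam powr t * r ^ (j - 1)) = (lam powr (1 - t) * lam powr t) * r ^ (j - 1)"
    by simp
  also have "lam powr (1 - t) * lam powr t = lam"
    using lampos by (simp add: powr_add[symmetric])
  finally show ?thesis using mp unfolding r_def mu_def by simp
qed

theorem corollary2p3:
  fixes j :: nat and lam :: real
  assumes "j \<ge> 2" and "lam > 0"
  shows "(\<forall>n::nat. int n \<ge> max \<lceil>1 / lam\<rceil> (int j - 2) \<longrightarrow>
            lambda_nj n j lam \<ge> lam / (1 + lam) ^ (j - 1))
      \<and> ((\<lambda>n. lambda_hat_nj n (j - 1) lam) \<longlonglongrightarrow> lam / (1 + lam) ^ (j - 1))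
      \<and> ((\<lambda>n. lambda_nj n j lam) \<longlonglongrightarrow> lam / (1 + lam) ^ (j - 1))"
proof -
  have j1: "j \<ge> 1" using assms by simp
  have cond: "n \<ge> 1 \<and> 1 / real n \<le> lam" if "int n \<ge> \<lceil>1 / lam\<rceil>" for n
  proof -
    have "real n \<ge> 1 / lam" using that by linarith
    moreover have "1 / lam > 0" using assms by simp
    ultimately have "real n > 0" "real n \<ge> 1 / lam" by linarith+
    then show ?thesis using assms by (auto simp: field_simps)
  qed
  have part1: "lambda_nj n j lam \<ge> lam / (1 + lam) ^ (j - 1)"
    if "int n \<ge> max \<lceil>1 / lam\<rceil> (int j - 2)" for n
  proof -
    from cond that have c: "n \<ge> 1" "1 / real n \<le> lam" by auto
    note F = lambda_formula[OF c j1]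
    have "1 / (1 + lam) \<le> (1 + mu_SS n lam) / (1 + lam)"
      using F assms by (simp add: divide_right_mono)
    then have "(1 / (1 + lam)) ^ (j - 1) \<le> ((1 + mu_SS n lam) / (1 + lam)) ^ (j - 1)"
      by (rule power_mono) (use assms in simp)
    then have "lam * (1 / (1 + lam)) ^ (j - 1) \<le> lam * ((1 + mu_SS n lam) / (1 + lam)) ^ (j - 1)"
      using assms by (simp add: mult_left_mono)
    then show ?thesis using F by (simp add: power_one_over)
  qed
  have ev: "eventually (\<lambda>n. int n \<ge> \<lceil>1 / lam\<rceil>) sequentially"
    by (rule eventually_sequentiallyI[of "nat \<lceil>1 / lam\<rceil>"]) linarith
  have mu0: "(\<lambda>n. mu_SS n lam) \<longlonglongrightarrow> 0"
  proof (rule tendsto_sandwich[of "\<lambda>_. 0" _ _ "\<lambda>n. 1 / real n"])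
    show "eventually (\<lambda>n. 0 \<le> mu_SS n lam) sequentially"
      using ev by eventually_elim (use cond lambda_formula[OF _ _ j1] in force)
    show "eventually (\<lambda>n. mu_SS n lam \<le> 1 / real n) sequentially"
      using ev by eventually_elim (use cond lambda_formula[OF _ _ j1] in force)
    show "(\<lambda>n. 1 / real n) \<longlonglongrightarrow> 0" by (rule lim_const_over_n)
  qed simp
  have lim: "(\<lambda>n. lam * ((1 + mu_SS n lam) / (1 + lam)) ^ (j - 1)) \<longlonglongrightarrow>
      lam * ((1 + 0) / (1 + lam)) ^ (j - 1)"
    using assms by (intro tendsto_intros mu0) auto
  have lim2: "(\<lambda>n. lambda_nj n j lam) \<longlonglongrightarrow> lam / (1 + lam) ^ (j - 1)"
  proof -
    have "eventually (\<lambda>n. lam * ((1 + mu_SS n lam) / (1 + lam)) ^ (j - 1) = lambda_nj n j lam) sequentially"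
      using ev by eventually_elim (use cond lambda_formula[OF _ _ j1] in force)
    from Lim_transform_eventually[OF lim this] show ?thesis by (simp add: power_one_over)
  qed
  have "lambda_hat_nj n (j - 1) lam = lambda_nj n j lam" for n
    unfolding lambda_hat_nj_def using j1 by simp
  then show ?thesis using part1 lim2 by simp
qed

end
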